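(* Let $p$ be an indecomposable permutation of $[n]$ avoiding $3241$ and $4321$ that contains $321$, with associated triple $(a,b,c)$. Then: (i) if $c$ is finite, all entries to the right of $a$ in $p$ are $\ge c$; (ii) if $c=\infty$, or if $c$ is finite and $c>b+1$, then $b+1$ lies to the left of $b$ in $p$; (iii) if $c=\infty$, then $a$ is the last entry of $p$; (iv) if $z>b$ is an entry of $p$, and in case $c$ is finite $z$ lies to the left of $c$ in $p$, then $z$ is a left-to-right maximum of $p$.
   Context: Permutations are in one-line notation; pattern containment/avoidance is classical. Indecomposable: no $k$, $1\le k\le n-1$, with $\{p_1,\dots,p_k\}=\{1,\dots,k\}$. An entry is a left-to-right maximum (LRMax) if it exceeds all entries to its left. The associated triple $(a,b,c)$ of a $321$-containing permutation: $a$ is the rightmost entry that plays the role of "1" in some occurrence of $321$; $b$ is the rightmost entry to the left of $a$ that exceeds $a$; $c$ is the first entry to the right of $a$ that is not a LRMax, with $c=\infty$ if no such entry exists. *)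

theory Defs
  imports Main
begin

text \<open>Permutations of [n] are lists in one-line notation; positions are 0-based.\<close>

definition is_perm :: "nat list \<Rightarrow> nat \<Rightarrow> bool" where
  "is_perm p n \<longleftrightarrow> distinct p \<and> set p = {1..n}"

definition contains :: "nat list \<Rightarrow> nat list \<Rightarrow> bool" where
  "contains p q \<longleftrightarrow> (\<exists>is :: nat list. length is = length q \<and> sorted_wrt (<) is \<and>
      (\<forall>j < length is. is ! j < length p) \<and>
      (\<forall>j < length q. \<forall>k < length q. (p ! (is ! j) < p ! (is ! k)) \<longleftrightarrow> (q ! j < q ! k)))"

definition avoids :: "nat list \<Rightarrow> nat list \<Rightarrow> bool" where
  "avoids p q \<longleftrightarrow> \<not> contains p q"

definition indecomposable :: "nat list \<Rightarrow> bool" where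
  "indecomposable p \<longleftrightarrow> (\<forall>k. 1 \<le> k \<and> k \<le> length p - 1 \<longrightarrow> set (take k p) \<noteq> {1..k})"

definition lrmax :: "nat list \<Rightarrow> nat \<Rightarrow> bool" where
  "lrmax p i \<longleftrightarrow> (\<forall>j < i. p ! j < p ! i)"

definition plays_one_321 :: "nat list \<Rightarrow> nat \<Rightarrow> bool" where
  "plays_one_321 p i \<longleftrightarrow> i < length p \<and>
     (\<exists>i1 i2. i1 < i2 \<and> i2 < i \<and> p ! i1 > p ! i2 \<and> p ! i2 > p ! i)"

definition pos_a :: "nat list \<Rightarrow> nat" where
  "pos_a p = (GREATEST i. plays_one_321 p i)"

definition pos_b :: "nat list \<Rightarrow> nat" where
  "pos_b p = (GREATEST j. j < pos_a p \<and> p ! j > p ! pos_a p)"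

text \<open>Position of c: first position right of a that is not a LRMax; None encodes c = infinity.\<close>
definition pos_c :: "nat list \<Rightarrow> nat option" where
  "pos_c p = (if \<exists>j. pos_a p < j \<and> j < length p \<and> \<not> lrmax p j
              then Some (LEAST j. pos_a p < j \<and> j < length p \<and> \<not> lrmax p j)
              else None)"

end

theory Submission
  imports Defs
begin

lemma c4321: "i<j \<Longrightarrow> j<k \<Longrightarrow> k<l \<Longrightarrow> l < length p \<Longrightarrow> p!i > p!j \<Longrightarrow> p!j > p!k \<Longrightarrow> p!k > p!l \<Longrightarrow> contains p [4,3,2,1]"
  unfolding contains_def
  apply (rule exI[of _ "[i,j,k,l]"])
  apply (auto simp add: less_Suc_eq numeral_eq_Suc)
  done
lemma c3241: "i<j \<Longrightarrow> j<k \<Longrightarrow> k<l \<Longrightarrow> l < length p \<Longrightarrow> p!i > p!j \<Longrightarrow> p!k > p!i \<Longrightarrow> p!j > p!l \<Longrightarrow> contains p [3,2,4,1]"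
  unfolding contains_def
  apply (rule exI[of _ "[i,j,k,l]"])
  apply (auto simp add: less_Suc_eq numeral_eq_Suc)
  done
lemma get321: "contains p [3,2,1] \<Longrightarrow> \<exists>i j k. i<j \<and> j<k \<and> k < length p \<and> p!i > p!j \<and> p!j > p!k"
  unfolding contains_def
  apply (elim exE conjE)
  subgoal for xs
    apply (rule exI[of _ "xs!0"], rule exI[of _ "xs!1"], rule exI[of _ "xs!2"])
    apply (auto simp: sorted_wrt_iff_nth_less numeral_eq_Suc)
    done
  done
lemma decomp:
  assumes perm: "is_perm p n" and indec: "indecomposable p"
    and k1: "1 \<le> k" and k2: "k \<le> length p - 1"
    and sep: "\<forall>i<k. \<forall>l. k \<le> l \<and> l < length p \<longrightarrow> p!i < p!l"
  shows False
proof -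
  have len: "length p = n" using perm unfolding is_perm_def using distinct_card[of p] by simp
  have dist: "distinct p" and sp: "set p = {1..n}" using perm unfolding is_perm_def by auto
  define S where "S = set (take k p)"
  have kn: "k \<le> n" using k2 len by auto
  have cS: "card S = k" unfolding S_def using dist kn len by (simp add: distinct_card)
  have sub: "{1..k} \<subseteq> S"
  proof
    fix y assume y: "y \<in> {1..k}"
    show "y \<in> S"
    proof (rule ccontr)
      assume yn: "y \<notin> S"
      have "y \<in> set p" using y kn sp by auto
      then obtain l where l: "l < length p" "p!l = y" by (auto simp: in_set_conv_nth)
      have lk: "k \<le> l"
      proof (rule ccontr)
        assume "\<not> k \<le> l"
        then have "y \<in> S" unfolding S_def using l by (auto simp: in_set_conv_nth)
        then show False using yn by simp
      qed
      have "S \<subseteq> {1..y-1}"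
      proof
        fix x assume "x \<in> S"
        then obtain i where i: "i < k" "i < length p" "p!i = x" unfolding S_def by (auto simp: in_set_conv_nth)
        have "x < y" using sep i(1) l lk i(3) by blast
        moreover have "x \<ge> 1" using i sp nth_mem[of i p] by auto
        ultimately show "x \<in> {1..y-1}" by auto
      qed
      then have "card S \<le> y - 1" using card_mono[of "{1..y-1}" S] by simp
      then show False using cS y by auto
    qed
  qed
  have "S = {1..k}" using card_subset_eq[of S "{1..k}"] sub cS unfolding S_def by simp
  then show False using indec k1 k2 unfolding indecomposable_def S_def by auto
qed
theorem lemma7:
  fixes p :: "nat list" and n :: nat
  assumes perm: "is_perm p n"
    and indec: "indecomposable p"
    and av1: "avoids p [3,2,4,1]"
    and av2: "avoids p [4,3,2,1]"
    and c321: "contains p [3,2,1]"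
  shows "(\<forall>jc. pos_c p = Some jc \<longrightarrow> (\<forall>j. pos_a p < j \<and> j < length p \<longrightarrow> p ! j \<ge> p ! jc))
       \<and> ((pos_c p = None \<or> (\<exists>jc. pos_c p = Some jc \<and> p ! jc > p ! pos_b p + 1))
            \<longrightarrow> (\<exists>j < pos_b p. p ! j = p ! pos_b p + 1))
       \<and> (pos_c p = None \<longrightarrow> pos_a p = length p - 1)
       \<and> (\<forall>i < length p. p ! i > p ! pos_b p \<and>
             (\<forall>jc. pos_c p = Some jc \<longrightarrow> i < jc) \<longrightarrow> lrmax p i)"
proof -
  have len: "length p = n" using perm unfolding is_perm_def using distinct_card[of p] by simp
  have dist: "distinct p" and sp: "set p = {1..n}" using perm unfolding is_perm_def by auto
  have inj: "\<And>i j. i < n \<Longrightarrow> j < n \<Longrightarrow> p!i = p!j \<Longrightarrow> i = j"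
    using dist len nth_eq_iff_index_eq by blast
  have vals: "\<And>i. i < n \<Longrightarrow> 1 \<le> p!i \<and> p!i \<le> n"
    using sp len nth_mem by fastforce
  have n4321: "\<And>i j k l. i<j \<Longrightarrow> j<k \<Longrightarrow> k<l \<Longrightarrow> l < n \<Longrightarrow> p!i > p!j \<Longrightarrow> p!j > p!k \<Longrightarrow> p!k > p!l \<Longrightarrow> False"
    using av2 c4321 len unfolding avoids_def by blast
  have n3241: "\<And>i j k l. i<j \<Longrightarrow> j<k \<Longrightarrow> k<l \<Longrightarrow> l < n \<Longrightarrow> p!i > p!j \<Longrightarrow> p!k > p!i \<Longrightarrow> p!j > p!l \<Longrightarrow> False"
    using av1 c3241 len unfolding avoids_def by blast
  define A where "A = pos_a p"
  define B where "B = pos_b p"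
  obtain x1 x2 x3 where x: "x1<x2" "x2<x3" "x3<n" "p!x1 > p!x2" "p!x2 > p!x3"
    using get321[OF c321] len by blast
  have px3: "plays_one_321 p x3" unfolding plays_one_321_def using x len by blast
  have bnd: "\<And>y. plays_one_321 p y \<Longrightarrow> y \<le> n" unfolding plays_one_321_def using len by auto
  have pA: "plays_one_321 p A" unfolding A_def pos_a_def using GreatestI_nat[of "plays_one_321 p", OF px3 bnd] .
  have Amax: "\<And>y. plays_one_321 p y \<Longrightarrow> y \<le> A" unfolding A_def pos_a_def
    using Greatest_le_nat bnd by blast
  have An: "A < n" using pA len unfolding plays_one_321_def by auto
  obtain i1 i2 where ii: "i1 < i2" "i2 < A" "p!i1 > p!i2" "p!i2 > p!A"
    using pA unfolding plays_one_321_def by blast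
  have no321: "\<And>j i1 i2. A < j \<Longrightarrow> j < n \<Longrightarrow> i1 < i2 \<Longrightarrow> i2 < j \<Longrightarrow> p!i1 > p!i2 \<Longrightarrow> p!i2 > p!j \<Longrightarrow> False"
  proof -
    fix j i1 i2 assume "A < j" "j < n" "i1 < i2" "i2 < j" "p!i1 > p!i2" "p!i2 > p!j"
    then have "plays_one_321 p j" unfolding plays_one_321_def using len by blast
    then show False using Amax \<open>A < j\<close> by fastforce
  qed
  have Bex: "i2 < A \<and> p!i2 > p!A" using ii by auto
  have Bbnd: "\<And>y. y < A \<and> p!y > p!A \<Longrightarrow> y \<le> A" by auto
  have pB: "B < A \<and> p!B > p!A" unfolding B_def pos_b_def A_def[symmetric]
    using GreatestI_nat[of "\<lambda>j. j < A \<and> p!j > p!A", OF Bex Bbnd] .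
  have Bmax: "\<And>y. y < A \<Longrightarrow> p!y > p!A \<Longrightarrow> y \<le> B" unfolding B_def pos_b_def A_def[symmetric]
    using Greatest_le_nat[of "\<lambda>j. j < A \<and> p!j > p!A", OF _ Bbnd] by blast
  have i2B: "i2 \<le> B" using Bmax ii by auto
  have L1: "\<exists>i0<B. p!i0 > p!B"
  proof (cases "i2 = B")
    case True then show ?thesis using ii by auto
  next
    case False
    then have lt: "i2 < B" using i2B by auto
    show ?thesis
    proof (cases "p!i2 > p!B")
      case True then show ?thesis using lt by auto
    next
      case False
      have "p!i2 \<noteq> p!B" using inj[of i2 B] lt pB An ii(2) by auto
      then have f: "p!i2 < p!B" using False by linarith
      show ?thesis
      proof (cases "p!i1 > p!B")
        case True then show ?thesis using lt ii(1) less_trans[of i1 i2 B] by blast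
      next
        case False
        have "p!i1 \<noteq> p!B" using inj[of i1 B] lt pB An ii by auto
        then have "p!i1 < p!B" using False by linarith
        then show ?thesis using n3241[of i1 i2 B A] ii lt pB An by auto
      qed
    qed
  qed
  then obtain i0 where i0: "i0 < B" "p!i0 > p!B" by blast
  define Q where "Q = (\<lambda>j. A < j \<and> j < length p \<and> \<not> lrmax p j)"
  have Cprop: "\<And>jc. pos_c p = Some jc \<Longrightarrow> A < jc \<and> jc < n \<and> \<not> lrmax p jc \<and> (\<forall>j. A < j \<and> j < jc \<longrightarrow> lrmax p j)"
  proof -
    fix jc assume h: "pos_c p = Some jc"
    then have ex: "\<exists>j. Q j" unfolding pos_c_def Q_def A_def by (auto split: if_splits)
    have jc: "jc = (LEAST j. Q j)" using h ex unfolding pos_c_def Q_def A_def by (auto split: if_splits)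
    have "Q jc" using LeastI_ex[OF ex] jc by simp
    moreover have "\<forall>j. A < j \<and> j < jc \<longrightarrow> lrmax p j"
    proof (intro allI impI)
      fix j assume j: "A < j \<and> j < jc"
      then have "\<not> Q j" using not_less_Least[of j Q] jc by simp
      moreover have "jc < length p" using \<open>Q jc\<close> unfolding Q_def by simp
      ultimately show "lrmax p j" using j unfolding Q_def by auto
    qed
    ultimately show "A < jc \<and> jc < n \<and> \<not> lrmax p jc \<and> (\<forall>j. A < j \<and> j < jc \<longrightarrow> lrmax p j)"
      unfolding Q_def using len by auto
  qed
  have Nprop: "pos_c p = None \<Longrightarrow> (\<forall>j. A < j \<and> j < n \<longrightarrow> lrmax p j)"
    unfolding pos_c_def A_def using len by (auto split: if_splits)
  have lrafter: "\<And>j. A < j \<Longrightarrow> j < n \<Longrightarrow> (\<forall>jc. pos_c p = Some jc \<longrightarrow> j < jc) \<Longrightarrow> lrmax p j"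
  proof -
    fix j assume h: "A < j" "j < n" "\<forall>jc. pos_c p = Some jc \<longrightarrow> j < jc"
    show "lrmax p j"
    proof (cases "pos_c p")
      case None then show ?thesis using Nprop h by auto
    next
      case (Some jc) then show ?thesis using Cprop[OF Some] h by auto
    qed
  qed
  have P1: "\<forall>jc. pos_c p = Some jc \<longrightarrow> (\<forall>j. A < j \<and> j < length p \<longrightarrow> p ! j \<ge> p ! jc)"
  proof (intro allI impI)
    fix C j assume hC: "pos_c p = Some C" and hj: "A < j \<and> j < length p"
    have C: "A < C" "C < n" "\<not> lrmax p C" "\<forall>j. A < j \<and> j < C \<longrightarrow> lrmax p j" using Cprop[OF hC] by auto
    obtain i where i: "i < C" "p!i \<ge> p!C" using C(3) unfolding lrmax_def by (auto simp: not_less)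
    have i': "p!i > p!C" using i inj[of i C] C by fastforce
    have aftC: "\<And>l. C < l \<Longrightarrow> l < n \<Longrightarrow> p!C < p!l"
    proof (rule ccontr)
      fix l assume l: "C < l" "l < n" "\<not> p!C < p!l"
      then have "p!l < p!C" using inj[of C l] C by fastforce
      then show False using no321[of l i C] i i' C l by auto
    qed
    show "p!j \<ge> p!C"
    proof (rule ccontr)
      assume "\<not> p!C \<le> p!j"
      then have lt: "p!j < p!C" by simp
      have "j \<noteq> C" using lt by auto
      then consider "C < j" | "j < C" by linarith
      then show False
      proof cases
        case 1 then show False using aftC[of j] lt hj len by auto
      next
        case 2
        have lrj: "lrmax p j" using C(4) hj 2 by auto
        show False
        proof (rule decomp[OF perm indec, of "j+1"])
          show "1 \<le> j + 1" by simp
          show "j + 1 \<le> length p - 1" using 2 C len by auto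
          show "\<forall>i<j + 1. \<forall>l. j + 1 \<le> l \<and> l < length p \<longrightarrow> p ! i < p ! l"
          proof (intro allI impI)
            fix i' l assume a: "i' < j + 1" "j + 1 \<le> l \<and> l < length p"
            have "p!i' \<le> p!j"
            proof (cases "i' = j")
              case False then have "i' < j" using a(1) by simp
              then show ?thesis using lrj unfolding lrmax_def by (simp add: less_imp_le)
            qed simp
            moreover have "p!j < p!l"
            proof -
              consider "l < C" | "l = C" | "C < l" by linarith
              then show ?thesis
              proof cases
                case 1 then have "lrmax p l" using C(4) a hj by auto
                then show ?thesis unfolding lrmax_def using a by auto
              next
                case 2 then show ?thesis using lt by simp
              next
                case 3 then show ?thesis using aftC[of l] lt a len by auto
              qed
            qed
            ultimately show "p!i' < p!l" by simp
          qed
        qed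
      qed
    qed
  qed
  have P3: "pos_c p = None \<longrightarrow> A = length p - 1"
  proof
    assume hN: "pos_c p = None"
    show "A = length p - 1"
    proof (rule ccontr)
      assume "A \<noteq> length p - 1"
      then have Al: "A + 1 \<le> length p - 1" using An len by auto
      show False
      proof (rule decomp[OF perm indec, of "A+1"])
        show "1 \<le> A + 1" by simp
        show "A + 1 \<le> length p - 1" by (rule Al)
        show "\<forall>i<A + 1. \<forall>l. A + 1 \<le> l \<and> l < length p \<longrightarrow> p ! i < p ! l"
        proof (intro allI impI)
          fix i l assume a: "i < A + 1" "A + 1 \<le> l \<and> l < length p"
          have "lrmax p l" using Nprop[OF hN] a len by auto
          then show "p!i < p!l" unfolding lrmax_def using a by auto
        qed
      qed
    qed
  qed
  have P2: "(pos_c p = None \<or> (\<exists>jc. pos_c p = Some jc \<and> p ! jc > p ! B + 1))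
            \<longrightarrow> (\<exists>j < B. p ! j = p ! B + 1)"
  proof
    assume hyp: "pos_c p = None \<or> (\<exists>jc. pos_c p = Some jc \<and> p ! jc > p ! B + 1)"
    have Bn: "B < n" using pB An by auto
    have "p!B + 1 \<le> n" using i0 vals[of i0] Bn by auto
    then have "p!B + 1 \<in> set p" using sp by auto
    then obtain q where q: "q < n" "p!q = p!B + 1" using len by (auto simp: in_set_conv_nth)
    have "q < B"
    proof (cases "q \<le> A")
      case True
      have "q \<noteq> A" using q pB by auto
      then have "q \<le> B" using Bmax[of q] True q pB by auto
      moreover have "q \<noteq> B" using q by auto
      ultimately show ?thesis by auto
    next
      case False
      then have qA: "A < q" by simp
      show ?thesis
      proof (cases "pos_c p")
        case None
        then have "lrmax p q" using Nprop qA q by auto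
        then have "p!i0 < p!q" unfolding lrmax_def using i0 pB qA by auto
        then show ?thesis using q i0 by auto
      next
        case (Some C)
        then have "p!C > p!B + 1" using hyp by auto
        moreover have "p!q \<ge> p!C" using P1 Some qA q len A_def by auto
        ultimately show ?thesis using q by auto
      qed
    qed
    then show "\<exists>j < B. p ! j = p ! B + 1" using q by auto
  qed
  have P4: "\<forall>i < length p. p ! i > p ! B \<and> (\<forall>jc. pos_c p = Some jc \<longrightarrow> i < jc) \<longrightarrow> lrmax p i"
  proof (intro allI impI)
    fix i assume il: "i < length p" and h: "p ! i > p ! B \<and> (\<forall>jc. pos_c p = Some jc \<longrightarrow> i < jc)"
    show "lrmax p i"
    proof (cases "A < i")
      case True then show ?thesis using lrafter h il len by auto
    next
      case False
      have "i \<noteq> A" using h pB by auto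
      then have iA: "i < A" using False by auto
      then have "i \<le> B" using Bmax h pB by auto
      moreover have "i \<noteq> B" using h by auto
      ultimately have iB: "i < B" by auto
      show ?thesis unfolding lrmax_def
      proof (intro allI impI)
        fix j assume j: "j < i"
        show "p!j < p!i"
        proof (rule ccontr)
          assume "\<not> p!j < p!i"
          then have "p!j > p!i" using inj[of j i] j iB pB An by fastforce
          then show False using n4321[of j i B A] j iB pB An h by auto
        qed
      qed
    qed
  qed
  show ?thesis using P1 P2 P3 P4 unfolding A_def B_def by blast
qed

end
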